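(* Let $p$ be prime, $\mathbb{F}=\mathbb{F}_p$, and let $x,y,z\in\mathbb{F}^N$ satisfy $\sum_{t=1}^Nx(t)^iy(t)^az(t)^b=0$ for all $0\le a,b,i\le p-1$ (with the convention $0^0=1$). Then $$(S_{2p})_{y,z}(x)=\mathcal{H}\big(y^{(p)},z^{(p)}\big),$$ where $S_{2p}(x)=\sum_{T\subseteq[N],|T|=2p}\prod_{i\in T}x_i$.
   Context: Directional derivatives: $f_y(x)=f(x+y)-f(x)$, $f_{y,z}=(f_y)_z$. By definition $\mathcal{H}(y^{(p)},z^{(p)})=\sum_{1\le j_1<\dots<j_{2p}\le N}\ \sum_{\theta\subseteq[2p],|\theta|=p}\ \prod_{i\in\theta}y(j_i)\prod_{i\in[2p]\setminus\theta}z(j_i)$, where $y(j)$ is the $j$-th coordinate of $y$. *)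

theory Defs
  imports "HOL-Computational_Algebra.Primes"
begin

text \<open>Vectors in F^N are functions nat => 'a, with coordinates indexed by 1..N.\<close>

definition esym :: "nat \<Rightarrow> nat \<Rightarrow> (nat \<Rightarrow> 'a::comm_ring_1) \<Rightarrow> 'a" where
  "esym N k x = (\<Sum>T \<in> {T. T \<subseteq> {1..N} \<and> card T = k}. \<Prod>i\<in>T. x i)"

definition dderiv :: "((nat \<Rightarrow> 'a::comm_ring_1) \<Rightarrow> 'a) \<Rightarrow> (nat \<Rightarrow> 'a) \<Rightarrow> (nat \<Rightarrow> 'a) \<Rightarrow> 'a" where
  "dderiv f y = (\<lambda>x. f (\<lambda>t. x t + y t) - f x)"

definition incr_tuples :: "nat \<Rightarrow> nat \<Rightarrow> (nat \<Rightarrow> nat) set" where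
  "incr_tuples N m = {j. (\<forall>i\<in>{1..m}. 1 \<le> j i \<and> j i \<le> N)
                         \<and> (\<forall>i. i \<notin> {1..m} \<longrightarrow> j i = 0)
                         \<and> (\<forall>i1 i2. 1 \<le> i1 \<and> i1 < i2 \<and> i2 \<le> m \<longrightarrow> j i1 < j i2)}"

definition Hform :: "nat \<Rightarrow> nat \<Rightarrow> (nat \<Rightarrow> 'a::comm_ring_1) \<Rightarrow> (nat \<Rightarrow> 'a) \<Rightarrow> 'a" where
  "Hform N p y z = (\<Sum>j \<in> incr_tuples N (2*p).
      \<Sum>\<theta> \<in> {\<theta>. \<theta> \<subseteq> {1..2*p} \<and> card \<theta> = p}.
        (\<Prod>i\<in>\<theta>. y (j i)) * (\<Prod>i\<in>{1..2*p} - \<theta>. z (j i)))"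

end

theory Submission
  imports Defs "HOL-Number_Theory.Residues"
begin


definition ksub :: "'b set \<Rightarrow> nat \<Rightarrow> 'b set set" where
  "ksub I k = {T. T \<subseteq> I \<and> card T = k}"

lemma finite_ksub[simp]: "finite I \<Longrightarrow> finite (ksub I k)"
  unfolding ksub_def by (rule finite_subset[of _ "Pow I"]) auto

lemma split_sum:
  assumes "finite J" "finite K" "J \<inter> K = {}"
  shows "(\<Sum>T\<in>ksub (J\<union>K) k. \<Phi> (T\<inter>J) (T\<inter>K)) =
         (\<Sum>i\<le>k. \<Sum>A\<in>ksub J i. \<Sum>B\<in>ksub K (k-i). \<Phi> A B)"
proof -
  have "(\<Sum>i\<le>k. \<Sum>A\<in>ksub J i. \<Sum>B\<in>ksub K (k-i). \<Phi> A B)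
      = (\<Sum>i\<le>k. \<Sum>(A,B)\<in>ksub J i \<times> ksub K (k-i). \<Phi> A B)"
    by (simp add: sum.cartesian_product)
  also have "\<dots> = (\<Sum>(A,B)\<in>(\<Union>i\<le>k. ksub J i \<times> ksub K (k-i)). \<Phi> A B)"
    by (rule sum.UNION_disjoint[symmetric]) (use assms in \<open>auto simp: ksub_def\<close>)
  also have "\<dots> = (\<Sum>T\<in>ksub (J\<union>K) k. \<Phi> (T\<inter>J) (T\<inter>K))"
  proof (rule sum.reindex_bij_witness[of _ "\<lambda>T. (T\<inter>J, T\<inter>K)" "\<lambda>(A,B). A \<union> B"])
    fix T assume T: "T \<in> ksub (J\<union>K) k"
    then have fT: "finite T" using assms by (auto simp: ksub_def intro: finite_subset)
    have "card T = card (T\<inter>J) + card (T\<inter>K)"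
      using T fT assms by (subst card_Un_disjoint[symmetric]) (auto simp: ksub_def intro!: arg_cong[where f=card])
    then show "(T\<inter>J, T\<inter>K) \<in> (\<Union>i\<le>k. ksub J i \<times> ksub K (k-i))"
      using T by (auto simp: ksub_def intro!: bexI[of _ "card (T\<inter>J)"])
    show "(case (T\<inter>J, T\<inter>K) of (A,B) \<Rightarrow> A \<union> B) = T" using T by (auto simp: ksub_def)
  next
    fix AB assume AB: "AB \<in> (\<Union>i\<le>k. ksub J i \<times> ksub K (k-i))"
    obtain A B where [simp]: "AB = (A,B)" by (cases AB)
    from AB obtain i where i: "i \<le> k" "A \<subseteq> J" "card A = i" "B \<subseteq> K" "card B = k - i"
      by (auto simp: ksub_def)
    have "card (A \<union> B) = k"
      using i assms by (subst card_Un_disjoint) (auto intro: finite_subset)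
    then show "(case AB of (A,B) \<Rightarrow> A \<union> B) \<in> ksub (J\<union>K) k"
      using i by (auto simp: ksub_def)
    show "((case AB of (A,B) \<Rightarrow> A \<union> B) \<inter> J, (case AB of (A,B) \<Rightarrow> A \<union> B) \<inter> K) = AB"
      using i assms by auto
  next
    fix AB assume AB: "AB \<in> (\<Union>i\<le>k. ksub J i \<times> ksub K (k-i))"
    obtain A B where [simp]: "AB = (A,B)" by (cases AB)
    from AB have "A \<subseteq> J" "B \<subseteq> K" by (auto simp: ksub_def)
    then have "(A \<union> B) \<inter> J = A" "(A \<union> B) \<inter> K = B" using assms by auto
    then show "\<Phi> ((case AB of (A,B) \<Rightarrow> A \<union> B) \<inter> J) ((case AB of (A,B) \<Rightarrow> A \<union> B) \<inter> K) = (case AB of (A,B) \<Rightarrow> \<Phi> A B)"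
      by simp
  qed
  finally show ?thesis ..
qed

definition S :: "nat \<Rightarrow> ('b \<Rightarrow> 'a::comm_ring_1) \<Rightarrow> 'b set \<Rightarrow> 'a" where
  "S k w I = (\<Sum>T\<in>ksub I k. prod w T)"

lemma S_union:
  assumes "finite J" "finite K" "J \<inter> K = {}"
  shows "S k w (J\<union>K) = (\<Sum>i\<le>k. S i w J * S (k-i) w K)"
proof -
  have "S k w (J\<union>K) = (\<Sum>T\<in>ksub (J\<union>K) k. prod w (T\<inter>J) * prod w (T\<inter>K))"
    unfolding S_def
  proof (rule sum.cong)
    fix T assume "T \<in> ksub (J\<union>K) k"
    then have "T = (T\<inter>J) \<union> (T\<inter>K)" "finite T" using assms by (auto simp: ksub_def intro: finite_subset)
    then show "prod w T = prod w (T\<inter>J) * prod w (T\<inter>K)"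
      using assms by (metis finite_Int prod.union_disjoint inf_assoc inf_bot_right inf_commute inf_left_commute)
  qed simp
  also have "\<dots> = (\<Sum>i\<le>k. \<Sum>A\<in>ksub J i. \<Sum>B\<in>ksub K (k-i). prod w A * prod w B)"
    by (rule split_sum[OF assms])
  also have "\<dots> = (\<Sum>i\<le>k. S i w J * S (k-i) w K)"
    by (simp add: S_def sum_product)
  finally show ?thesis .
qed

lemma S_const:
  assumes "finite B" "\<And>t. t \<in> B \<Longrightarrow> w t = v"
  shows "S j w B = of_nat (card B choose j) * v ^ j"
proof -
  have "S j w B = (\<Sum>T\<in>ksub B j. v ^ j)"
    unfolding S_def
  proof (rule sum.cong)
    fix T assume "T \<in> ksub B j"
    then have T: "T \<subseteq> B" "card T = j" by (auto simp: ksub_def)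
    then have "prod w T = prod (\<lambda>_. v) T" using assms by (intro prod.cong) auto
    then show "prod w T = v ^ j" using T by simp
  qed simp
  also have "\<dots> = of_nat (card B choose j) * v ^ j"
    using n_subsets[OF assms(1), of j] by (simp add: ksub_def)
  finally show ?thesis .
qed

lemma ksub_0[simp]: "finite I \<Longrightarrow> ksub I 0 = {{}}"
  unfolding ksub_def using finite_subset by (fastforce simp: card_eq_0_iff)

lemma S_0[simp]: "finite I \<Longrightarrow> S 0 w I = 1"
  by (simp add: S_def)

lemma S_empty: fixes w :: "'b \<Rightarrow> 'a::comm_ring_1" shows "S k w {} = (if k = 0 then 1 else 0)"
proof -
  have "k \<noteq> 0 \<Longrightarrow> ksub ({}::'b set) k = {}" by (auto simp: ksub_def)
  then show ?thesis by (cases "k = 0") (simp_all add: S_def)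
qed

lemma sum_one:
  assumes "finite A" "a \<in> A" "\<And>i. i \<in> A \<Longrightarrow> i \<noteq> a \<Longrightarrow> f i = 0"
  shows "sum f A = f a"
proof -
  have "sum f A = sum f {a}"
    by (rule sum.mono_neutral_right) (use assms in auto)
  then show ?thesis by simp
qed

lemma sum_two:
  assumes "finite A" "a \<in> A" "b \<in> A" "a \<noteq> b" "\<And>i. i \<in> A \<Longrightarrow> i \<noteq> a \<Longrightarrow> i \<noteq> b \<Longrightarrow> f i = 0"
  shows "sum f A = f a + f b"
proof -
  have "sum f A = sum f {a,b}"
    by (rule sum.mono_neutral_right) (use assms in auto)
  then show ?thesis using assms by simp
qed

definition E :: "nat \<Rightarrow> ('b \<Rightarrow> 'a::comm_ring_1) \<Rightarrow> ('b \<Rightarrow> 'a) \<Rightarrow> 'b set \<Rightarrow> 'a" where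
  "E p y z I = (\<Sum>B\<in>ksub I p. prod y B * S p z (I - B))"

context
  fixes dummy :: "'a::{field,finite}"
  assumes pr: "prime (card (UNIV :: 'a set))"
begin

lemma CHAR_card: "CHAR('a) = card (UNIV :: 'a set)"
proof -
  have "CHAR('a) dvd card (UNIV :: 'a set)" by (rule CHAR_dvd_CARD)
  moreover have "CHAR('a) \<noteq> 1"
    using of_nat_CHAR[where 'a='a] by auto
  ultimately show ?thesis using pr by (auto simp: prime_nat_iff)
qed

lemma ofnat0: "(of_nat n :: 'a) = 0 \<longleftrightarrow> card (UNIV :: 'a set) dvd n"
  by (simp add: of_nat_eq_0_iff_char_dvd CHAR_card)

lemma choose0: "j \<noteq> 0 \<Longrightarrow> j \<noteq> card (UNIV :: 'a set) \<Longrightarrow> (of_nat (card (UNIV :: 'a set) choose j) :: 'a) = 0"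
proof -
  assume j: "j \<noteq> 0" "j \<noteq> card (UNIV :: 'a set)"
  show ?thesis
  proof (cases "j < card (UNIV :: 'a set)")
    case True
    then show ?thesis using j pr by (simp add: ofnat0 dvd_choose_prime)
  next
    case False
    then show ?thesis using j by (simp add: binomial_eq_0)
  qed
qed

lemma pow_card: "(v :: 'a) ^ card (UNIV :: 'a set) = v"
proof (cases "v = 0")
  case False
  have "v * (\<Prod>y\<in>UNIV-{0}. v * y) = v * v ^ (card (UNIV :: 'a set) - 1) * \<Prod>(UNIV-{0})"
    by (simp add: prod.distrib mult_ac)
  also have "v * v ^ (card (UNIV :: 'a set) - 1) = v ^ Suc (card (UNIV :: 'a set) - 1)"
    by (subst power_Suc) auto
  also have "Suc (card (UNIV :: 'a set) - 1) = card (UNIV :: 'a set)"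
    using finite_UNIV_card_ge_0[where ?'a = 'a] by simp
  also have "(\<Prod>y\<in>UNIV-{0}. v * y) = (\<Prod>y\<in>UNIV-{0}. y)"
    by (rule prod.reindex_bij_witness[of _ "\<lambda>y. y / v" "\<lambda>y. v * y"]) (use False in auto)
  finally show ?thesis
    by simp
qed (use finite_UNIV_card_ge_0[where ?'a = 'a] in auto)

lemma S_block:
  fixes w :: "'b \<Rightarrow> 'a"
  assumes "finite J" "finite B" "J \<inter> B = {}" "card B = card (UNIV :: 'a set)"
    "\<And>t. t \<in> B \<Longrightarrow> w t = v"
  shows "S k w (J \<union> B) = S k w J + (if card (UNIV :: 'a set) \<le> k then S (k - card (UNIV :: 'a set)) w J * v else 0)"
proof -
  define p where "p = card (UNIV :: 'a set)"
  have p0: "p > 0" using pr unfolding p_def by (simp add: prime_gt_0_nat)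
  have "S k w (J \<union> B) = (\<Sum>i\<le>k. S i w J * (of_nat (p choose (k-i)) * v ^ (k-i)))"
    unfolding S_union[OF assms(1-3)] using S_const[OF assms(2,5)] assms(4) p_def by simp
  also have "\<dots> = S k w J + (if p \<le> k then S (k - p) w J * v else 0)"
  proof (cases "p \<le> k")
    case True
    have "(\<Sum>i\<le>k. S i w J * (of_nat (p choose (k-i)) * v ^ (k-i))) =
      S k w J * (of_nat (p choose (k-k)) * v ^ (k-k)) + S (k-p) w J * (of_nat (p choose (k-(k-p))) * v ^ (k-(k-p)))"
    proof (rule sum_two)
      fix i assume "i \<in> {..k}" "i \<noteq> k" "i \<noteq> k - p"
      then have "k - i \<noteq> 0" "k - i \<noteq> p" using True by auto
      then show "S i w J * (of_nat (p choose (k-i)) * v ^ (k-i)) = 0"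
        using choose0 p_def by simp
    qed (use True p0 in auto)
    then show ?thesis using True pow_card p_def by simp
  next
    case False
    have "(\<Sum>i\<le>k. S i w J * (of_nat (p choose (k-i)) * v ^ (k-i))) =
      S k w J * (of_nat (p choose (k-k)) * v ^ (k-k))"
    proof (rule sum_one)
      fix i assume "i \<in> {..k}" "i \<noteq> k"
      then have "k - i \<noteq> 0" "k - i \<noteq> p" using False by auto
      then show "S i w J * (of_nat (p choose (k-i)) * v ^ (k-i)) = 0"
        using choose0 p_def by simp
    qed auto
    then show ?thesis using False by simp
  qed
  finally show ?thesis unfolding p_def .
qed


lemma E_block:
  fixes y z :: "'b \<Rightarrow> 'a"
  assumes J: "finite J" and B: "finite B" and JB: "J \<inter> B = {}" and cB: "card B = card (UNIV :: 'a set)"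
    and yB: "\<And>t. t \<in> B \<Longrightarrow> y t = Y" and zB: "\<And>t. t \<in> B \<Longrightarrow> z t = Z"
  shows "E (card (UNIV :: 'a set)) y z (J \<union> B) = E (card (UNIV :: 'a set)) y z J + Y * S (card (UNIV :: 'a set)) z J + Z * S (card (UNIV :: 'a set)) y J"
proof -
  define p where "p = card (UNIV :: 'a set)"
  have p0: "p > 0" using pr unfolding p_def by (simp add: prime_gt_0_nat)
  define \<Phi> where "\<Phi> A C = prod y A * prod y C * S p z ((J - A) \<union> (B - C))" for A C
  have "E p y z (J \<union> B) = (\<Sum>T\<in>ksub (J\<union>B) p. \<Phi> (T\<inter>J) (T\<inter>B))"
    unfolding E_def
  proof (rule sum.cong)
    fix T assume "T \<in> ksub (J\<union>B) p"
    then have T: "T = (T\<inter>J) \<union> (T\<inter>B)" "finite T" "T \<subseteq> J \<union> B" using J B by (auto simp: ksub_def intro: finite_subset)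
    then have "prod y T = prod y (T\<inter>J) * prod y (T\<inter>B)"
      using JB by (metis finite_Int prod.union_disjoint inf_assoc inf_bot_right inf_commute inf_left_commute)
    moreover have "J \<union> B - T = (J - T\<inter>J) \<union> (B - T\<inter>B)" by auto
    ultimately show "prod y T * S p z (J \<union> B - T) = \<Phi> (T\<inter>J) (T\<inter>B)" unfolding \<Phi>_def by simp
  qed simp
  also have "\<dots> = (\<Sum>i\<le>p. \<Sum>A\<in>ksub J i. \<Sum>C\<in>ksub B (p-i). \<Phi> A C)"
    by (rule split_sum[OF J B JB])
  also have "\<dots> = (\<Sum>i\<le>p. of_nat (p choose (p-i)) * (\<Sum>A\<in>ksub J i. prod y A * Y ^ (p-i) *
                    (\<Sum>l\<le>p. S l z (J-A) * (of_nat (i choose (p-l)) * Z ^ (p-l)))))"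
  proof (rule sum.cong[OF refl])
    fix i assume i: "i \<in> {..p}"
    have "(\<Sum>A\<in>ksub J i. \<Sum>C\<in>ksub B (p-i). \<Phi> A C) =
          (\<Sum>A\<in>ksub J i. \<Sum>C\<in>ksub B (p-i). prod y A * Y ^ (p-i) *
                    (\<Sum>l\<le>p. S l z (J-A) * (of_nat (i choose (p-l)) * Z ^ (p-l))))"
    proof (intro sum.cong[OF refl])
      fix A C assume A: "A \<in> ksub J i" and C: "C \<in> ksub B (p-i)"
      have fC: "finite C" using C B by (auto simp: ksub_def intro: finite_subset)
      have Cs: "C \<subseteq> B" "card C = p - i" using C by (auto simp: ksub_def)
      have cC: "card (B - C) = i" using Cs fC i cB p_def by (simp add: card_Diff_subset)
      have "prod y C = prod (\<lambda>_. Y) C" using C yB by (intro prod.cong) (auto simp: ksub_def)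
      then have pC: "prod y C = Y ^ (p-i)" using C by (simp add: ksub_def)
      have "S p z ((J - A) \<union> (B - C)) = (\<Sum>l\<le>p. S l z (J-A) * S (p-l) z (B - C))"
        by (rule S_union) (use J B JB in auto)
      also have "\<dots> = (\<Sum>l\<le>p. S l z (J-A) * (of_nat (i choose (p-l)) * Z ^ (p-l)))"
        using S_const[of "B - C" z Z] B zB cC by simp
      finally show "\<Phi> A C = prod y A * Y ^ (p-i) * (\<Sum>l\<le>p. S l z (J-A) * (of_nat (i choose (p-l)) * Z ^ (p-l)))"
        unfolding \<Phi>_def pC by simp
    qed
    also have "\<dots> = of_nat (p choose (p-i)) * (\<Sum>A\<in>ksub J i. prod y A * Y ^ (p-i) *
                    (\<Sum>l\<le>p. S l z (J-A) * (of_nat (i choose (p-l)) * Z ^ (p-l))))"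
      using n_subsets[OF B, of "p-i"] cB p_def by (simp add: ksub_def sum_distrib_left)
    finally show "(\<Sum>A\<in>ksub J i. \<Sum>C\<in>ksub B (p-i). \<Phi> A C) = of_nat (p choose (p-i)) * (\<Sum>A\<in>ksub J i. prod y A * Y ^ (p-i) *
                    (\<Sum>l\<le>p. S l z (J-A) * (of_nat (i choose (p-l)) * Z ^ (p-l))))" .
  qed
  also have "\<dots> = of_nat (p choose (p-p)) * (\<Sum>A\<in>ksub J p. prod y A * Y ^ (p-p) *
                    (\<Sum>l\<le>p. S l z (J-A) * (of_nat (p choose (p-l)) * Z ^ (p-l))))
               + of_nat (p choose (p-0)) * (\<Sum>A\<in>ksub J 0. prod y A * Y ^ (p-0) *
                    (\<Sum>l\<le>p. S l z (J-A) * (of_nat (0 choose (p-l)) * Z ^ (p-l))))"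
  proof (rule sum_two)
    fix i assume "i \<in> {..p}" "i \<noteq> p" "i \<noteq> 0"
    then have "p - i \<noteq> 0" "p - i \<noteq> p" by auto
    then show "of_nat (p choose (p-i)) * (\<Sum>A\<in>ksub J i. prod y A * Y ^ (p-i) *
                    (\<Sum>l\<le>p. S l z (J-A) * (of_nat (i choose (p-l)) * Z ^ (p-l)))) = 0"
      using choose0 p_def by simp
  qed (use p0 in auto)
  also have "(\<Sum>A\<in>ksub J 0. prod y A * Y ^ (p-0) *
                    (\<Sum>l\<le>p. S l z (J-A) * (of_nat (0 choose (p-l)) * Z ^ (p-l)))) = Y * S p z J"
  proof -
    have "(\<Sum>l\<le>p. S l z J * (of_nat (0 choose (p-l)) * Z ^ (p-l))) = S p z J * (of_nat (0 choose (p-p)) * Z ^ (p-p))"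
      by (rule sum_one) (auto simp: binomial_eq_0)
    then show ?thesis using J pow_card p_def by simp
  qed
  also have "(\<Sum>A\<in>ksub J p. prod y A * Y ^ (p-p) *
                    (\<Sum>l\<le>p. S l z (J-A) * (of_nat (p choose (p-l)) * Z ^ (p-l))))
           = (\<Sum>A\<in>ksub J p. prod y A * S p z (J-A) + Z * prod y A)"
  proof (rule sum.cong[OF refl])
    fix A assume A: "A \<in> ksub J p"
    have "(\<Sum>l\<le>p. S l z (J-A) * (of_nat (p choose (p-l)) * Z ^ (p-l))) =
       S p z (J-A) * (of_nat (p choose (p-p)) * Z ^ (p-p)) + S 0 z (J-A) * (of_nat (p choose (p-0)) * Z ^ (p-0))"
    proof (rule sum_two)
      fix l assume "l \<in> {..p}" "l \<noteq> p" "l \<noteq> 0"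
      then have "p - l \<noteq> 0" "p - l \<noteq> p" by auto
      then show "S l z (J-A) * (of_nat (p choose (p-l)) * Z ^ (p-l)) = 0" using choose0 p_def by simp
    qed (use p0 in auto)
    then show "prod y A * Y ^ (p-p) * (\<Sum>l\<le>p. S l z (J-A) * (of_nat (p choose (p-l)) * Z ^ (p-l)))
        = prod y A * S p z (J-A) + Z * prod y A"
      using J pow_card p_def by (simp add: algebra_simps)
  qed
  also have "\<dots> = E p y z J + Z * S p y J"
    by (simp add: E_def S_def sum.distrib sum_distrib_left)
  finally show ?thesis unfolding p_def by (simp add: algebra_simps)
qed


lemma main_ind:
  fixes x y z :: "'b \<Rightarrow> 'a"
  assumes pdef: "p = card (UNIV :: 'a set)"
  shows "finite I \<Longrightarrow> (\<forall>P. p dvd card {t\<in>I. (x t, y t, z t) = P}) \<Longrightarrow>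
    (\<forall>a b c. S p (\<lambda>t. a * x t + b * y t + c * z t) I = a * S p x I + b * S p y I + c * S p z I) \<and>
    S (2*p) (\<lambda>t. x t + z t + y t) I - S (2*p) (\<lambda>t. x t + z t) I - (S (2*p) (\<lambda>t. x t + y t) I - S (2*p) x I)
      = E p y z I"
proof (induction "card I" arbitrary: I rule: less_induct)
  case less
  have p0: "p > 0" using pr unfolding pdef by (simp add: prime_gt_0_nat)
  show ?case
  proof (cases "I = {}")
    case True
    have "ksub ({}::'b set) p = {}" using p0 by (auto simp: ksub_def)
    then show ?thesis using True p0 by (simp add: S_empty E_def)
  next
    case False
    then obtain t0 where t0: "t0 \<in> I" by auto
    define C where "C = {t\<in>I. (x t, y t, z t) = (x t0, y t0, z t0)}"
    have fC: "finite C" using less.prems(1) by (simp add: C_def)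
    have "card C > 0" using t0 fC by (auto simp: C_def card_gt_0_iff)
    moreover have "p dvd card C" using less.prems(2) by (simp add: C_def)
    ultimately have "p \<le> card C" by (simp add: dvd_imp_le)
    then obtain B where B: "B \<subseteq> C" "card B = p" "finite B" by (rule obtain_subset_with_card_n)
    define J where "J = I - B"
    have BI: "B \<subseteq> I" using B by (auto simp: C_def)
    have IJB: "I = J \<union> B" "J \<inter> B = {}" using BI by (auto simp: J_def)
    have fJ: "finite J" using less.prems(1) by (simp add: J_def)
    have cJ: "card J < card I" using B BI p0 less.prems(1) card_mono[OF less.prems(1) BI] by (simp add: J_def card_Diff_subset)
    have goodJ: "\<forall>P. p dvd card {t\<in>J. (x t, y t, z t) = P}"
    proof
      fix P
      show "p dvd card {t\<in>J. (x t, y t, z t) = P}"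
      proof (cases "P = (x t0, y t0, z t0)")
        case True
        then have "{t\<in>J. (x t, y t, z t) = P} = C - B" by (auto simp: C_def J_def)
        then have "card {t\<in>J. (x t, y t, z t) = P} = card C - p" using B fC by (simp add: card_Diff_subset)
        then show ?thesis using \<open>p dvd card C\<close> by simp
      next
        case False
        then have "{t\<in>J. (x t, y t, z t) = P} = {t\<in>I. (x t, y t, z t) = P}" using B by (auto simp: C_def J_def)
        then show ?thesis using less.prems(2) by (metis (no_types))
      qed
    qed
    note IH = less.hyps[OF cJ fJ goodJ]
    have xB: "\<And>t. t \<in> B \<Longrightarrow> x t = x t0" and yB: "\<And>t. t \<in> B \<Longrightarrow> y t = y t0"
      and zB: "\<And>t. t \<in> B \<Longrightarrow> z t = z t0" using B by (auto simp: C_def)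
    have cBp: "card B = card (UNIV :: 'a set)" using B pdef by simp
    have blk: "S k w I = S k w J + (if p \<le> k then S (k - p) w J * v else 0)"
      if "\<And>t. t \<in> B \<Longrightarrow> w t = v" for k and w :: "'b \<Rightarrow> 'a" and v :: 'a
      unfolding IJB(1) pdef by (rule S_block[OF fJ B(3) IJB(2) cBp that])
    let ?X = "x t0" and ?Y = "y t0" and ?Z = "z t0"
    have lin: "S p (\<lambda>t. a * x t + b * y t + c * z t) I = a * S p x I + b * S p y I + c * S p z I" for a b c
    proof -
      have "S p (\<lambda>t. a * x t + b * y t + c * z t) I = S p (\<lambda>t. a * x t + b * y t + c * z t) J + (a * ?X + b * ?Y + c * ?Z)"
        using blk[of "\<lambda>t. a * x t + b * y t + c * z t" "a * ?X + b * ?Y + c * ?Z" p] xB yB zB fJ by simp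
      moreover have "S p x I = S p x J + ?X" using blk[of x ?X p] xB fJ by simp
      moreover have "S p y I = S p y J + ?Y" using blk[of y ?Y p] yB fJ by simp
      moreover have "S p z I = S p z J + ?Z" using blk[of z ?Z p] zB fJ by simp
      ultimately show ?thesis using IH by (simp add: algebra_simps)
    qed
    have e1: "(\<lambda>t. x t + z t + y t) = (\<lambda>t. 1 * x t + 1 * y t + 1 * z t)" by (simp add: algebra_simps)
    have e2: "(\<lambda>t. x t + z t) = (\<lambda>t. 1 * x t + 0 * y t + 1 * z t)" by simp
    have e3: "(\<lambda>t. x t + y t) = (\<lambda>t. 1 * x t + 1 * y t + 0 * z t)" by simp
    have ppp: "2 * p - p = p" by simp
    have s1: "S (2*p) (\<lambda>t. x t + z t + y t) I = S (2*p) (\<lambda>t. x t + z t + y t) J + S p (\<lambda>t. x t + z t + y t) J * (?X + ?Z + ?Y)"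
      using blk[of "\<lambda>t. x t + z t + y t" "?X + ?Z + ?Y" "2*p"] xB yB zB by (simp add: ppp)
    have s2: "S (2*p) (\<lambda>t. x t + z t) I = S (2*p) (\<lambda>t. x t + z t) J + S p (\<lambda>t. x t + z t) J * (?X + ?Z)"
      using blk[of "\<lambda>t. x t + z t" "?X + ?Z" "2*p"] xB zB by (simp add: ppp)
    have s3: "S (2*p) (\<lambda>t. x t + y t) I = S (2*p) (\<lambda>t. x t + y t) J + S p (\<lambda>t. x t + y t) J * (?X + ?Y)"
      using blk[of "\<lambda>t. x t + y t" "?X + ?Y" "2*p"] xB yB by (simp add: ppp)
    have s4: "S (2*p) x I = S (2*p) x J + S p x J * ?X"
      using blk[of x ?X "2*p"] xB by (simp add: ppp)
    have eb: "E p y z I = E p y z J + ?Y * S p z J + ?Z * S p y J"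
      unfolding IJB(1) pdef by (rule E_block[OF fJ B(3) IJB(2) cBp yB zB])
    have l1: "S p (\<lambda>t. x t + z t + y t) J = S p x J + S p y J + S p z J"
    proof -
      have "S p (\<lambda>t. 1 * x t + 1 * y t + 1 * z t) J = 1 * S p x J + 1 * S p y J + 1 * S p z J" using IH by blast
      then show ?thesis unfolding e1 by simp
    qed
    have l2: "S p (\<lambda>t. x t + z t) J = S p x J + S p z J"
    proof -
      have "S p (\<lambda>t. 1 * x t + 0 * y t + 1 * z t) J = 1 * S p x J + 0 * S p y J + 1 * S p z J" using IH by blast
      then show ?thesis unfolding e2 by simp
    qed
    have l3: "S p (\<lambda>t. x t + y t) J = S p x J + S p y J"
    proof -
      have "S p (\<lambda>t. 1 * x t + 1 * y t + 0 * z t) J = 1 * S p x J + 1 * S p y J + 0 * S p z J" using IH by blast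
      then show ?thesis unfolding e3 by simp
    qed
    have "S (2*p) (\<lambda>t. x t + z t + y t) I - S (2*p) (\<lambda>t. x t + z t) I - (S (2*p) (\<lambda>t. x t + y t) I - S (2*p) x I)
       = E p y z I"
      unfolding s1 s2 s3 s4 eb l1 l2 l3 using conjunct2[OF IH] by (simp add: algebra_simps)
    then show ?thesis using lin by blast
  qed
qed

end



lemma incr_inj: "j \<in> incr_tuples N m \<Longrightarrow> inj_on j {1..m}"
proof -
  assume j: "j \<in> incr_tuples N m"
  have inc: "\<And>i1 i2. 1 \<le> i1 \<Longrightarrow> i1 < i2 \<Longrightarrow> i2 \<le> m \<Longrightarrow> j i1 < j i2"
    using j unfolding incr_tuples_def by blast
  show ?thesis
  proof (rule inj_onI)
    fix a b assume ab: "a \<in> {1..m}" "b \<in> {1..m}" "j a = j b"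
    show "a = b"
    proof (rule ccontr)
      assume "a \<noteq> b"
      then consider "a < b" | "b < a" by linarith
      then show False using inc ab by (cases) (auto, (metis less_irrefl)+)
    qed
  qed
qed

lemma inner_theta:
  fixes y z :: "nat \<Rightarrow> 'a::comm_ring_1"
  assumes j: "j \<in> incr_tuples N m"
  shows "(\<Sum>\<theta> \<in> {\<theta>. \<theta> \<subseteq> {1..m} \<and> card \<theta> = k}. (\<Prod>i\<in>\<theta>. y (j i)) * (\<Prod>i\<in>{1..m} - \<theta>. z (j i)))
       = (\<Sum>B\<in>ksub (j ` {1..m}) k. prod y B * prod z (j ` {1..m} - B))"
proof (rule sum.reindex_bij_witness[of _ "\<lambda>B. {i\<in>{1..m}. j i \<in> B}" "\<lambda>\<theta>. j ` \<theta>"])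
  have inj: "inj_on j {1..m}" by (rule incr_inj[OF j])
  fix \<theta> assume th: "\<theta> \<in> {\<theta>. \<theta> \<subseteq> {1..m} \<and> card \<theta> = k}"
  then have ths: "\<theta> \<subseteq> {1..m}" by auto
  show "{i\<in>{1..m}. j i \<in> j ` \<theta>} = \<theta>"
  proof (intro equalityI subsetI)
    fix i assume "i \<in> {i\<in>{1..m}. j i \<in> j ` \<theta>}"
    then obtain i' where i': "i' \<in> \<theta>" "j i = j i'" "i \<in> {1..m}" by auto
    then have "i = i'" using inj_onD[OF inj i'(2) i'(3)] ths by blast
    then show "i \<in> \<theta>" using i' by simp
  qed (use ths in auto)
  have "card (j ` \<theta>) = k" using card_image[OF inj_on_subset[OF inj ths]] th by simp
  then show "j ` \<theta> \<in> ksub (j ` {1..m}) k" using ths by (auto simp: ksub_def)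
  have i1: "(\<Prod>i\<in>\<theta>. y (j i)) = prod y (j ` \<theta>)"
    using inj ths by (simp add: prod.reindex inj_on_subset)
  have "j ` {1..m} - j ` \<theta> = j ` ({1..m} - \<theta>)" using inj ths by (simp add: inj_on_image_set_diff)
  then have i2: "(\<Prod>i\<in>{1..m} - \<theta>. z (j i)) = prod z (j ` {1..m} - j ` \<theta>)"
    using inj by (simp add: prod.reindex inj_on_subset)
  show "prod y (j ` \<theta>) * prod z (j ` {1..m} - j ` \<theta>) = (\<Prod>i\<in>\<theta>. y (j i)) * (\<Prod>i\<in>{1..m} - \<theta>. z (j i))"
    using i1 i2 by simp
next
  have inj: "inj_on j {1..m}" by (rule incr_inj[OF j])
  fix B assume B: "B \<in> ksub (j ` {1..m}) k"
  then have Bs: "B \<subseteq> j ` {1..m}" "card B = k" by (auto simp: ksub_def)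
  then show "j ` {i\<in>{1..m}. j i \<in> B} = B" by auto
  have "j ` {i\<in>{1..m}. j i \<in> B} = B" using Bs by auto
  moreover have "inj_on j {i\<in>{1..m}. j i \<in> B}" using inj by (rule inj_on_subset) auto
  ultimately have "card {i\<in>{1..m}. j i \<in> B} = k" using Bs card_image by metis
  then show "{i\<in>{1..m}. j i \<in> B} \<in> {\<theta>. \<theta> \<subseteq> {1..m} \<and> card \<theta> = k}" by auto
qed

definition en :: "nat \<Rightarrow> nat set \<Rightarrow> nat \<Rightarrow> nat" where
  "en m T i = (if i \<in> {1..m} then sorted_list_of_set T ! (i - 1) else 0)"

lemma tuples_sets:
  "(\<Sum>j\<in>incr_tuples N m. H (j ` {1..m})) = (\<Sum>T\<in>ksub {1..N} m. H T)"
proof (rule sum.reindex_bij_witness[of _ "en m" "\<lambda>j. j ` {1..m}"])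
  fix j assume j: "j \<in> incr_tuples N m"
  have inj: "inj_on j {1..m}" by (rule incr_inj[OF j])
  define l where "l = map (\<lambda>k. j (k+1)) [0..<m]"
  have inc: "\<And>i1 i2. 1 \<le> i1 \<Longrightarrow> i1 < i2 \<Longrightarrow> i2 \<le> m \<Longrightarrow> j i1 < j i2"
    using j unfolding incr_tuples_def by blast
  have "sorted_wrt (<) l"
    unfolding sorted_wrt_iff_nth_less l_def
  proof (intro allI impI)
    fix a b assume "a < b" "b < length (map (\<lambda>k. j (k+1)) [0..<m])"
    then show "map (\<lambda>k. j (k+1)) [0..<m] ! a < map (\<lambda>k. j (k+1)) [0..<m] ! b"
      using inc[of "a+1" "b+1"] by simp
  qed
  moreover have "set l = j ` {1..m}"
  proof -
    have "(\<lambda>k. k+1) ` {0..<m} = {0+1..<m+1}"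
      by (rule image_add_atLeastLessThan')
    moreover have "{0+1..<m+1} = {1..m}" by auto
    ultimately have eq: "{1..m} = (\<lambda>k. k+1) ` {0..<m}" by simp
    have s1: "set l = (\<lambda>k. j (k+1)) ` {0..<m}" by (simp add: l_def)
    have s2: "(\<lambda>k. j (k+1)) ` {0..<m} = j ` ((\<lambda>k. k+1) ` {0..<m})" by (simp only: image_image)
    show ?thesis using s1 s2 eq by simp
  qed
  moreover have "length l = card (j ` {1..m})" using inj by (simp add: l_def card_image)
  ultimately have sl: "sorted_list_of_set (j ` {1..m}) = l"
    using sorted_list_of_set_unique[of "j ` {1..m}" l] by simp
  show "en m (j ` {1..m}) = j"
  proof
    fix i show "en m (j ` {1..m}) i = j i"
    proof (cases "i \<in> {1..m}")
      case True
      then show ?thesis unfolding en_def sl l_def by auto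
    next
      case False
      then have "j i = 0" using j unfolding incr_tuples_def by blast
      then show ?thesis unfolding en_def by (simp only: False if_False)
    qed
  qed
  have "j ` {1..m} \<subseteq> {1..N}" using j unfolding incr_tuples_def by auto
  then show "j ` {1..m} \<in> ksub {1..N} m"
    using inj by (simp add: ksub_def card_image)
next
  fix T assume T: "T \<in> ksub {1..N} m"
  then have Ts: "T \<subseteq> {1..N}" "card T = m" "finite T" by (auto simp: ksub_def intro: finite_subset)
  let ?l = "sorted_list_of_set T"
  have l: "sorted_wrt (<) ?l" "set ?l = T" "length ?l = m" using Ts by auto
  have mem: "?l ! (i-1) \<in> T" if "i \<in> {1..m}" for i
  proof -
    have "i - 1 < length ?l" using that l by auto
    then show ?thesis using nth_mem[of "i-1" ?l] l by simp
  qed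
  show "en m T ` {1..m} = T"
  proof
    show "en m T ` {1..m} \<subseteq> T" using mem by (auto simp: en_def)
    show "T \<subseteq> en m T ` {1..m}"
    proof
      fix t assume "t \<in> T"
      then obtain k where k: "k < m" "?l ! k = t" using l by (metis in_set_conv_nth)
      then have "en m T (k+1) = t" by (simp add: en_def)
      then show "t \<in> en m T ` {1..m}" using k by force
    qed
  qed
  show "en m T \<in> incr_tuples N m"
    unfolding incr_tuples_def
  proof (intro CollectI conjI allI ballI impI)
    fix i assume "i \<in> {1..m}"
    then have "?l ! (i-1) \<in> T" by (rule mem)
    then show "1 \<le> en m T i" "en m T i \<le> N" using Ts \<open>i \<in> {1..m}\<close> by (auto simp: en_def)
  next
    fix i assume "i \<notin> {1..m}" then show "en m T i = 0" unfolding en_def by (simp only: if_False)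
  next
    fix i1 i2 :: nat assume "1 \<le> i1 \<and> i1 < i2 \<and> i2 \<le> m"
    then have "i1 \<in> {1..m}" "i2 \<in> {1..m}" "i1 - 1 < i2 - 1" "i2 - 1 < length ?l" using l by auto
    then show "en m T i1 < en m T i2" unfolding en_def using sorted_wrt_nth_less[OF l(1)] by simp
  qed
qed simp

lemma pairs_sum:
  fixes y z :: "nat \<Rightarrow> 'a::comm_ring_1"
  assumes I: "finite I"
  shows "(\<Sum>T\<in>ksub I (2*p). \<Sum>B\<in>ksub T p. prod y B * prod z (T - B)) = E p y z I"
proof -
  have fT: "\<And>T. T \<in> ksub I (2*p) \<Longrightarrow> finite T" using I by (auto simp: ksub_def intro: finite_subset)
  have "(\<Sum>T\<in>ksub I (2*p). \<Sum>B\<in>ksub T p. prod y B * prod z (T - B))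
      = (\<Sum>(T,B)\<in>Sigma (ksub I (2*p)) (\<lambda>T. ksub T p). prod y B * prod z (T - B))"
    by (rule sum.Sigma) (use I fT in auto)
  also have "\<dots> = (\<Sum>(B,C)\<in>Sigma (ksub I p) (\<lambda>B. ksub (I - B) p). prod y B * prod z C)"
  proof (rule sum.reindex_bij_witness[of _ "\<lambda>(B,C). (B \<union> C, B)" "\<lambda>(T,B). (B, T - B)"])
    fix a assume a: "a \<in> Sigma (ksub I (2*p)) (\<lambda>T. ksub T p)"
    obtain T B where [simp]: "a = (T,B)" by (cases a)
    from a have T: "T \<subseteq> I" "card T = 2*p" "B \<subseteq> T" "card B = p" by (auto simp: ksub_def)
    have fin: "finite T" "finite B" using T I by (auto intro: finite_subset)
    show "(case case a of (T, B) \<Rightarrow> (B, T - B) of (B, C) \<Rightarrow> (B \<union> C, B)) = a" using T by auto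
    have "card (T - B) = p" using T fin by (simp add: card_Diff_subset)
    then show "(case a of (T, B) \<Rightarrow> (B, T - B)) \<in> Sigma (ksub I p) (\<lambda>B. ksub (I - B) p)"
      using T by (auto simp: ksub_def)
    show "(case case a of (T, B) \<Rightarrow> (B, T - B) of (B, C) \<Rightarrow> prod y B * prod z C) = (case a of (T, B) \<Rightarrow> prod y B * prod z (T - B))"
      by simp
  next
    fix b assume b: "b \<in> Sigma (ksub I p) (\<lambda>B. ksub (I - B) p)"
    obtain B C where [simp]: "b = (B,C)" by (cases b)
    from b have T: "B \<subseteq> I" "card B = p" "C \<subseteq> I - B" "card C = p" by (auto simp: ksub_def)
    have fin: "finite C" "finite B" using T I by (auto intro: finite_subset)
    show "(case case b of (B, C) \<Rightarrow> (B \<union> C, B) of (T, B) \<Rightarrow> (B, T - B)) = b" using T by auto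
    have "card (B \<union> C) = 2 * p" using T fin by (subst card_Un_disjoint) auto
    then show "(case b of (B, C) \<Rightarrow> (B \<union> C, B)) \<in> Sigma (ksub I (2*p)) (\<lambda>T. ksub T p)"
      using T by (auto simp: ksub_def)
  qed
  also have "\<dots> = (\<Sum>B\<in>ksub I p. \<Sum>C\<in>ksub (I - B) p. prod y B * prod z C)"
    by (rule sum.Sigma[symmetric]) (use I in auto)
  also have "\<dots> = E p y z I"
    by (simp add: E_def S_def sum_distrib_left)
  finally show ?thesis .
qed



lemma poly_rep:
  fixes X :: "'a::comm_ring_1"
  shows "\<exists>c. \<forall>u. 1 - (u - X) ^ n = (\<Sum>i\<le>n. c i * u ^ i)"
proof (intro exI allI)
  fix u :: 'a
  have b: "(u - X) ^ n = (\<Sum>i\<le>n. of_nat (n choose i) * u ^ i * (- X) ^ (n - i))"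
    using binomial_ring[of u "-X" n] by simp
  have one: "(\<Sum>i\<le>n. (if i = 0 then 1 else 0) * u ^ i) = (1::'a)"
    by (subst sum_one[of _ 0]) auto
  show "1 - (u - X) ^ n = (\<Sum>i\<le>n. ((if i = 0 then 1 else 0) - of_nat (n choose i) * (- X) ^ (n - i)) * u ^ i)"
    unfolding b left_diff_distrib sum_subtractf one by (simp add: mult_ac)
qed

lemma indic:
  fixes u X :: "'a::{field,finite}"
  assumes pr: "prime (card (UNIV :: 'a set))"
  shows "1 - (u - X) ^ (card (UNIV :: 'a set) - 1) = (if u = X then 1 else 0)"
proof -
  define p where "p = card (UNIV :: 'a set)"
  have p2: "p \<ge> 2" using pr unfolding p_def by (simp add: prime_ge_2_nat)
  show ?thesis
  proof (cases "u = X")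
    case True then show ?thesis using p2 p_def by simp
  next
    case False
    define v where "v = u - X"
    have v0: "v \<noteq> 0" using False by (simp add: v_def)
    have "v ^ p = v" using pow_card[OF pr] p_def by simp
    moreover have "v ^ p = v * v ^ (p - 1)" using p2 by (metis Suc_diff_1 not_le not_less_eq_eq numeral_2_eq_2 power_Suc zero_less_Suc less_le_trans)
    ultimately have "v ^ (p-1) = 1" using v0 by (metis mult_cancel_left1)
    then show ?thesis using False by (simp add: v_def p_def)
  qed
qed

lemma good_from_moments:
  fixes x y z :: "nat \<Rightarrow> 'a::{field,finite}"
  assumes pr: "prime (card (UNIV :: 'a set))" and pdef: "p = card (UNIV :: 'a set)"
    and mom: "\<forall>i a b. i \<le> p - 1 \<and> a \<le> p - 1 \<and> b \<le> p - 1 \<longrightarrow>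
           (\<Sum>t=1..N. x t ^ i * y t ^ a * z t ^ b) = 0"
  shows "\<forall>P. p dvd card {t\<in>{1..N}. (x t, y t, z t) = P}"
proof
  fix P :: "'a \<times> 'a \<times> 'a"
  obtain X Y Z where P: "P = (X, Y, Z)" by (cases P) auto
  define n where "n = p - 1"
  obtain c where c: "\<And>u. 1 - (u - X) ^ n = (\<Sum>i\<le>n. c i * u ^ i)" using poly_rep by blast
  obtain d where d: "\<And>u. 1 - (u - Y) ^ n = (\<Sum>i\<le>n. d i * u ^ i)" using poly_rep by blast
  obtain e where e: "\<And>u. 1 - (u - Z) ^ n = (\<Sum>i\<le>n. e i * u ^ i)" using poly_rep by blast
  have ind: "(if (x t, y t, z t) = P then 1 else 0) =
     (\<Sum>i\<le>n. c i * x t ^ i) * (\<Sum>a\<le>n. d a * y t ^ a) * (\<Sum>b\<le>n. e b * z t ^ b)" for t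
  proof -
    have "(\<Sum>i\<le>n. c i * x t ^ i) * (\<Sum>a\<le>n. d a * y t ^ a) * (\<Sum>b\<le>n. e b * z t ^ b)
       = (1 - (x t - X) ^ n) * (1 - (y t - Y) ^ n) * (1 - (z t - Z) ^ n)"
      by (simp only: c d e)
    also have "\<dots> = (if x t = X then 1 else 0) * (if y t = Y then 1 else 0) * (if z t = Z then 1 else 0)"
      unfolding n_def pdef by (simp only: indic[OF pr])
    finally show ?thesis using P by auto
  qed
  have "of_nat (card {t\<in>{1..N}. (x t, y t, z t) = P}) = (\<Sum>t\<in>{t\<in>{1..N}. (x t, y t, z t) = P}. (1::'a))"
    by simp
  also have "\<dots> = (\<Sum>t=1..N. if (x t, y t, z t) = P then 1 else 0)"
    by (rule sum.inter_filter) simp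
  also have "\<dots> = (\<Sum>t=1..N. \<Sum>i\<le>n. \<Sum>a\<le>n. \<Sum>b\<le>n. (c i * d a * e b) * (x t ^ i * y t ^ a * z t ^ b))"
  proof (rule sum.cong[OF refl])
    fix t
    have "(\<Sum>i\<le>n. c i * x t ^ i) * (\<Sum>a\<le>n. d a * y t ^ a) * (\<Sum>b\<le>n. e b * z t ^ b)
      = (\<Sum>i\<le>n. \<Sum>a\<le>n. (c i * x t ^ i) * (d a * y t ^ a)) * (\<Sum>b\<le>n. e b * z t ^ b)"
      by (simp only: sum_product)
    also have "\<dots> = (\<Sum>i\<le>n. \<Sum>a\<le>n. (c i * x t ^ i) * (d a * y t ^ a) * (\<Sum>b\<le>n. e b * z t ^ b))"
      by (simp only: sum_distrib_right)
    also have "\<dots> = (\<Sum>i\<le>n. \<Sum>a\<le>n. \<Sum>b\<le>n. (c i * x t ^ i) * (d a * y t ^ a) * (e b * z t ^ b))"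
      by (simp only: sum_distrib_left)
    also have "\<dots> = (\<Sum>i\<le>n. \<Sum>a\<le>n. \<Sum>b\<le>n. (c i * d a * e b) * (x t ^ i * y t ^ a * z t ^ b))"
      by (simp only: mult_ac)
    finally show "(if (x t, y t, z t) = P then 1 else 0) = (\<Sum>i\<le>n. \<Sum>a\<le>n. \<Sum>b\<le>n. (c i * d a * e b) * (x t ^ i * y t ^ a * z t ^ b))"
      using ind by simp
  qed
  also have "\<dots> = (\<Sum>i\<le>n. \<Sum>t=1..N. \<Sum>a\<le>n. \<Sum>b\<le>n. (c i * d a * e b) * (x t ^ i * y t ^ a * z t ^ b))"
    by (rule sum.swap)
  also have "\<dots> = (\<Sum>i\<le>n. \<Sum>a\<le>n. \<Sum>t=1..N. \<Sum>b\<le>n. (c i * d a * e b) * (x t ^ i * y t ^ a * z t ^ b))"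
    by (rule sum.cong[OF refl], rule sum.swap)
  also have "\<dots> = (\<Sum>i\<le>n. \<Sum>a\<le>n. \<Sum>b\<le>n. \<Sum>t=1..N. (c i * d a * e b) * (x t ^ i * y t ^ a * z t ^ b))"
    by (rule sum.cong[OF refl], rule sum.cong[OF refl], rule sum.swap)
  also have "\<dots> = (\<Sum>i\<le>n. \<Sum>a\<le>n. \<Sum>b\<le>n. (c i * d a * e b) * (\<Sum>t=1..N. x t ^ i * y t ^ a * z t ^ b))"
    by (simp add: sum_distrib_left)
  also have "\<dots> = 0"
    using mom by (simp add: n_def)
  finally have "(of_nat (card {t\<in>{1..N}. (x t, y t, z t) = P}) :: 'a) = 0" .
  then show "p dvd card {t\<in>{1..N}. (x t, y t, z t) = P}" using ofnat0[OF pr] pdef by simp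
qed


theorem lemma3p1:
  fixes x y z :: "nat \<Rightarrow> 'a::{field, finite}"
    and p N :: nat
  assumes "prime p"
    and "card (UNIV :: 'a set) = p"
    and "\<forall>i a b. i \<le> p - 1 \<and> a \<le> p - 1 \<and> b \<le> p - 1 \<longrightarrow>
           (\<Sum>t=1..N. x t ^ i * y t ^ a * z t ^ b) = 0"
  shows "dderiv (dderiv (esym N (2*p)) y) z x = Hform N p y z"
proof -
  have pr: "prime (card (UNIV :: 'a set))" using assms(1,2) by simp
  have pdef: "p = card (UNIV :: 'a set)" using assms(2) by simp
  have good: "\<forall>P. p dvd card {t\<in>{1..N}. (x t, y t, z t) = P}"
    by (rule good_from_moments[OF pr pdef assms(3)])
  have M: "S (2*p) (\<lambda>t. x t + z t + y t) {1..N} - S (2*p) (\<lambda>t. x t + z t) {1..N}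
      - (S (2*p) (\<lambda>t. x t + y t) {1..N} - S (2*p) x {1..N}) = E p y z {1..N}"
    using main_ind[OF pr pdef, of "{1..N}" x y z] good by simp
  have es: "esym N k w = S k w {1..N}" for k and w :: "nat \<Rightarrow> 'a"
    by (simp add: esym_def S_def ksub_def)
  have L: "dderiv (dderiv (esym N (2*p)) y) z x = S (2*p) (\<lambda>t. x t + z t + y t) {1..N} - S (2*p) (\<lambda>t. x t + z t) {1..N}
      - (S (2*p) (\<lambda>t. x t + y t) {1..N} - S (2*p) x {1..N})"
    by (simp add: dderiv_def es)
  have "Hform N p y z = (\<Sum>j\<in>incr_tuples N (2*p). \<Sum>B\<in>ksub (j ` {1..2*p}) p. prod y B * prod z (j ` {1..2*p} - B))"
    unfolding Hform_def by (rule sum.cong[OF refl], rule inner_theta)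
  also have "\<dots> = (\<Sum>T\<in>ksub {1..N} (2*p). \<Sum>B\<in>ksub T p. prod y B * prod z (T - B))"
    by (rule tuples_sets)
  also have "\<dots> = E p y z {1..N}"
    by (rule pairs_sum) simp
  finally show ?thesis using L M by simp
qed

end
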